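(* Let $D$ be a division semialgebra over $\mathbb{Z}_\mathrm{max}$ with finite unit index, and let $G=D^\times/\mathbb{Z}_\mathrm{max}^\times$. Then for each positive integer $n$, $G$ has at most one cyclic subgroup of order $n$.
   Context: A (possibly noncommutative) semiring has a commutative associative addition with identity $0$ and an associative multiplication with identity $1$, satisfying both distributive laws; a division semiring is one in which every nonzero element is invertible. $\mathbb{Z}_\mathrm{max}=\mathbb{Z}\cup\{-\infty\}$ is the semifield with addition $\max$ and multiplication ordinary addition. A division semialgebra over a semifield $K$ is a division semiring $D$ with an injective homomorphism from $K$ into the center of $D$ (so $K^\times$ is a central subgroup of $D^\times$). The unit index is $\mathrm{ui}(D/K)=|D^\times/K^\times|$. *)

theory Defs
  imports "HOL-Algebra.Algebra"
begin

text \<open>Z_max = Z \<union> {-\<infinity>}, encoded as int option, None standing for -\<infinity>.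
 Addition is max, multiplication is ordinary addition.\<close>

type_synonym zmax = "int option"

fun zmax_add :: "zmax \<Rightarrow> zmax \<Rightarrow> zmax" where
  "zmax_add None y = y"
| "zmax_add x None = x"
| "zmax_add (Some a) (Some b) = Some (max a b)"

fun zmax_mul :: "zmax \<Rightarrow> zmax \<Rightarrow> zmax" where
  "zmax_mul (Some a) (Some b) = Some (a + b)"
| "zmax_mul _ _ = None"

definition zmax_zero :: zmax where "zmax_zero = None"
definition zmax_one :: zmax where "zmax_one = Some 0"

text \<open>The semiring is the whole type 'a with its operations +, *, 0, 1.\<close>

definition is_semiring :: "('a::{plus,times,zero,one}) itself \<Rightarrow> bool" where
  "is_semiring _ \<longleftrightarrow>
     (\<forall>a b c::'a. (a + b) + c = a + (b + c)) \<and>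
     (\<forall>a b::'a. a + b = b + a) \<and>
     (\<forall>a::'a. 0 + a = a) \<and>
     (\<forall>a b c::'a. (a * b) * c = a * (b * c)) \<and>
     (\<forall>a::'a. 1 * a = a \<and> a * 1 = a) \<and>
     (\<forall>a b c::'a. a * (b + c) = a * b + a * c) \<and>
     (\<forall>a b c::'a. (a + b) * c = a * c + b * c)"

definition sr_units :: "('a::{times,one}) set" where
  "sr_units = {x. \<exists>y. x * y = 1 \<and> y * x = 1}"

definition is_division_semiring :: "('a::{plus,times,zero,one}) itself \<Rightarrow> bool" where
  "is_division_semiring T \<longleftrightarrow> is_semiring T \<and> (\<forall>x::'a. x \<noteq> 0 \<longrightarrow> x \<in> sr_units)"

definition is_division_semialgebra_zmax :: "(zmax \<Rightarrow> 'a::{plus,times,zero,one}) \<Rightarrow> bool" where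
  "is_division_semialgebra_zmax phi \<longleftrightarrow>
     is_division_semiring TYPE('a) \<and>
     (\<forall>x y. phi (zmax_add x y) = phi x + phi y) \<and>
     (\<forall>x y. phi (zmax_mul x y) = phi x * phi y) \<and>
     phi zmax_zero = 0 \<and> phi zmax_one = 1 \<and>
     inj phi \<and>
     (\<forall>k (d::'a). phi k * d = d * phi k)"

definition units_group :: "('a::{times,one}) monoid" where
  "units_group = \<lparr>carrier = sr_units, monoid.mult = (*), monoid.one = 1\<rparr>"

text \<open>Image of Z_max^x = Z (the elements Some k).\<close>
definition scalar_units :: "(zmax \<Rightarrow> 'a) \<Rightarrow> 'a set" where
  "scalar_units phi = phi ` range Some"

definition unit_quotient :: "(zmax \<Rightarrow> ('a::{times,one})) \<Rightarrow> 'a set monoid" where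
  "unit_quotient phi = units_group Mod scalar_units phi"

end

theory Submission
  imports Defs "HOL-Algebra.Multiplicative_Group"
begin

lemma aux_dd: "(n::nat) \<le> n' \<Longrightarrow> n = n' * dd \<Longrightarrow> 0 < n' \<Longrightarrow> 0 < dd \<Longrightarrow> dd = 1"
proof (rule ccontr)
  assume h: "n \<le> n'" "n = n' * dd" "0 < n'" "0 < dd" "dd \<noteq> 1"
  then have "2 \<le> dd" by simp
  then have "n' * 2 \<le> n' * dd" by simp
  then show False using h by linarith
qed
lemma aux_d: "nat (d::int) = 1 \<Longrightarrow> d = 1" by simp

locale dsa =
  fixes phi :: "zmax \<Rightarrow> 'a::{plus,times,zero,one}"
  assumes A: "is_division_semialgebra_zmax phi"
begin

lemma SR: "is_semiring TYPE('a)" and DV: "\<And>x::'a. x \<noteq> 0 \<Longrightarrow> x \<in> sr_units"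
  using A unfolding is_division_semialgebra_zmax_def is_division_semiring_def by auto

lemma add_assoc: "(a + b) + c = a + (b + (c::'a))"
  and add_comm: "a + b = b + (a::'a)"
  and zero_add: "0 + a = (a::'a)"
  and mul_assoc: "(a * b) * c = a * (b * (c::'a))"
  and one_mul: "1 * a = (a::'a)" and mul_one: "a * 1 = (a::'a)"
  and distl: "a * (b + c) = a * b + a * (c::'a)"
  and distr: "(a + b) * c = a * c + b * (c::'a)"
  using SR unfolding is_semiring_def by auto

lemma phi_mul: "phi (Some a) * phi (Some b) = phi (Some (a+b))"
proof -
  have "phi (zmax_mul (Some a) (Some b)) = phi (Some a) * phi (Some b)"
    using A unfolding is_division_semialgebra_zmax_def by blast
  then show ?thesis by simp
qed
lemma phi_add: "phi (Some a) + phi (Some b) = phi (Some (max a b))"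
proof -
  have "phi (zmax_add (Some a) (Some b)) = phi (Some a) + phi (Some b)"
    using A unfolding is_division_semialgebra_zmax_def by blast
  then show ?thesis by simp
qed
lemma phi0: "phi (Some 0) = 1"
  using A unfolding is_division_semialgebra_zmax_def zmax_one_def by auto
lemma phiN: "phi None = 0"
  using A unfolding is_division_semialgebra_zmax_def zmax_zero_def by auto
lemma phi_inj: "inj phi"
  using A unfolding is_division_semialgebra_zmax_def by auto
lemma central: "phi k * d = d * phi k"
  using A unfolding is_division_semialgebra_zmax_def by auto
lemma one_ne_zero: "(1::'a) \<noteq> 0"
  using phi_inj phi0 phiN by (metis injD option.distinct(1))
lemma phi_Some_eq: "phi (Some a) = phi (Some b) \<longleftrightarrow> a = b"
  using phi_inj by (auto dest: injD)
lemma one_idem: "(1::'a) + 1 = 1"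
  using phi_add[of 0 0] phi0 by simp
lemma idem: "(x::'a) + x = x"
  using distl[of x 1 1] one_idem mul_one by simp

definition le :: "'a \<Rightarrow> 'a \<Rightarrow> bool" where "le x y \<longleftrightarrow> x + y = y"

lemma le_refl: "le x x" by (simp add: le_def idem)
lemma le_trans: "le x y \<Longrightarrow> le y z \<Longrightarrow> le x z"
  unfolding le_def
proof -
  assume h: "x + y = y" "y + z = z"
  have "x + z = x + (y + z)" using h by simp
  also have "\<dots> = (x + y) + z" by (simp add: add_assoc)
  also have "\<dots> = z" using h by simp
  finally show "x + z = z" .
qed
lemma le_antisym: "le x y \<Longrightarrow> le y x \<Longrightarrow> x = y"
  unfolding le_def using add_comm[of x y] by simp
lemma le_add: "le x (x + y)"
  unfolding le_def by (simp add: add_assoc[symmetric] idem)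
lemma le_multl: "le x y \<Longrightarrow> le (c * x) (c * y)"
  unfolding le_def by (simp add: distl[symmetric])
lemma le_multr: "le x y \<Longrightarrow> le (x * c) (y * c)"
  unfolding le_def by (simp add: distr[symmetric])
lemma le_phi: "le (phi (Some a)) (phi (Some b)) \<longleftrightarrow> a \<le> b"
  unfolding le_def phi_add phi_Some_eq by auto

abbreviation U :: "'a monoid" where "U \<equiv> units_group"

lemma U_simps [simp]: "carrier U = sr_units" "x \<otimes>\<^bsub>U\<^esub> y = x * y" "\<one>\<^bsub>U\<^esub> = 1"
  by (auto simp: units_group_def)

lemma units_mul: "(x::'a) \<in> sr_units \<Longrightarrow> y \<in> sr_units \<Longrightarrow> x * y \<in> sr_units"
proof -
  assume "x \<in> sr_units" "y \<in> sr_units"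
  then obtain x' y' where "x * x' = 1" "x' * x = 1" "y * y' = 1" "y' * y = 1"
    unfolding sr_units_def by auto
  note h = this
  have "(x * y) * (y' * x') = x * ((y * y') * x')" by (simp only: mul_assoc)
  then have e1: "(x * y) * (y' * x') = 1" using h by (simp add: one_mul)
  have "(y' * x') * (x * y) = y' * ((x' * x) * y)" by (simp only: mul_assoc)
  then have e2: "(y' * x') * (x * y) = 1" using h by (simp add: one_mul)
  from e1 e2 show ?thesis unfolding sr_units_def by blast
qed

lemma one_unit: "(1::'a) \<in> sr_units"
  unfolding sr_units_def using one_mul by blast

lemma U_group: "group U"
proof (rule groupI)
  show "\<And>x. x \<in> carrier U \<Longrightarrow> \<exists>y\<in>carrier U. y \<otimes>\<^bsub>U\<^esub> x = \<one>\<^bsub>U\<^esub>"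
    unfolding U_simps sr_units_def by blast
qed (auto simp: units_mul one_unit mul_assoc one_mul)

lemma U_inv: "x \<in> sr_units \<Longrightarrow> y * x = 1 \<Longrightarrow> x * y = 1 \<Longrightarrow> inv\<^bsub>U\<^esub> x = y"
  by (rule group.inv_equality[OF U_group]) (auto simp: sr_units_def)

lemma phi_unit: "phi (Some a) \<in> sr_units"
  unfolding sr_units_def using phi_mul[of a "-a"] phi_mul[of "-a" a] phi0 by auto

lemma powU_Suc: "x [^]\<^bsub>U\<^esub> Suc n = x [^]\<^bsub>U\<^esub> n * x"
  using monoid.nat_pow_Suc[OF group.is_monoid[OF U_group]] by simp

lemma phi_pow: "phi (Some a) [^]\<^bsub>U\<^esub> n = phi (Some (int n * a))"
proof (induction n)
  case 0 then show ?case using phi0 by simp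
next
  case (Suc n)
  then show ?case unfolding powU_Suc using phi_mul by (simp add: algebra_simps)
qed

lemma powU_0: "x [^]\<^bsub>U\<^esub> (0::nat) = 1"
  by simp
lemma powU_closed: "x \<in> sr_units \<Longrightarrow> x [^]\<^bsub>U\<^esub> (n::nat) \<in> sr_units"
  using monoid.nat_pow_closed[OF group.is_monoid[OF U_group]] by simp

lemma nonzero_unit: "(x::'a) \<noteq> 0 \<Longrightarrow> x \<in> sr_units" using DV by blast

lemma one_plus_ne0: "1 + (d::'a) \<noteq> 0"
proof
  assume h: "1 + d = 0"
  have "(1::'a) = 0 + 1" using zero_add by simp
  also have "\<dots> = 1 + 0" by (simp add: add_comm)
  also have "\<dots> = 1 + (1 + d)" using h by simp
  also have "\<dots> = (1 + 1) + d" by (simp add: add_assoc)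
  also have "\<dots> = 0" using h one_idem by simp
  finally show False using one_ne_zero by simp
qed

lemma lemmaA:
  assumes d: "d \<in> sr_units" and M: "0 < (M::nat)" and le: "le (d [^]\<^bsub>U\<^esub> M) 1"
  shows "le d 1"
proof -
  define e where "e = 1 + d"
  have eu: "e \<in> sr_units" using one_plus_ne0 nonzero_unit e_def by simp
  define P where "P m = e [^]\<^bsub>U\<^esub> (m::nat)" for m
  have Pstep: "P (Suc m) = P m + P m * d" for m
    unfolding P_def powU_Suc e_def distl mul_one ..
  have c1: "le 1 (P m)" for m
  proof (induction m)
    case 0 then show ?case by (simp add: P_def le_refl)
  next
    case (Suc m) then show ?case using Pstep le_add le_trans by metis
  qed
  have c2: "P (Suc m) = P m + d [^]\<^bsub>U\<^esub> Suc m" for m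
  proof (induction m)
    case 0 then show ?case
      using Pstep[of 0] by (simp add: P_def one_mul)
  next
    case (Suc m)
    have "P (Suc (Suc m)) = P (Suc m) + P (Suc m) * d" by (rule Pstep)
    also have "\<dots> = P (Suc m) + (P m * d + d [^]\<^bsub>U\<^esub> Suc (Suc m))"
      using Suc by (simp add: distr powU_Suc)
    also have "\<dots> = (P (Suc m) + P m * d) + d [^]\<^bsub>U\<^esub> Suc (Suc m)"
      by (simp add: add_assoc)
    also have "P (Suc m) + P m * d = P (Suc m)"
    proof -
      have "le (P m * d) (P (Suc m))"
        using le_add[of "P m * d" "P m"] Pstep[of m] add_comm[of "P m * d" "P m"] by simp
      then show ?thesis unfolding le_def by (simp add: add_comm)
    qed
    finally show ?case .
  qed
  obtain m where m: "M = Suc m" using M gr0_implies_Suc by blast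
  have "le (d [^]\<^bsub>U\<^esub> M) (P m)" using le c1 le_trans by blast
  then have "P M = P m" using c2[of m] m unfolding le_def by (simp add: add_comm)
  then have "P m * e = P m * 1" using m by (simp add: P_def powU_Suc mul_one)
  moreover have "P m \<in> sr_units" using eu by (simp add: P_def powU_closed)
  ultimately have "e = 1"
    using group.l_cancel_one[OF U_group, of "P m" e] eu mul_one by simp
  then show ?thesis unfolding le_def e_def by (simp add: add_comm)
qed

abbreviation N :: "'a set" where "N \<equiv> scalar_units phi"

lemma N_def': "N = phi ` range Some" by (simp add: scalar_units_def)

lemma phi_inv: "inv\<^bsub>U\<^esub> (phi (Some a)) = phi (Some (-a))"
  by (rule U_inv) (auto simp: phi_unit phi_mul phi0)

lemma N_subgroup: "subgroup N U"
proof (rule group.subgroupI[OF U_group])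
  show "N \<subseteq> carrier U" using phi_unit by (auto simp: N_def')
  show "N \<noteq> {}" by (simp add: N_def')
  show "inv\<^bsub>U\<^esub> a \<in> N" if "a \<in> N" for a
    using that phi_inv by (auto simp: N_def')
  show "a \<otimes>\<^bsub>U\<^esub> b \<in> N" if "a \<in> N" "b \<in> N" for a b
    using that phi_mul by (auto simp: N_def')
qed

lemma inv_unit: "x \<in> sr_units \<Longrightarrow> inv\<^bsub>U\<^esub> x \<in> sr_units"
  using group.inv_closed[OF U_group] by simp
lemma r_invU: "x \<in> sr_units \<Longrightarrow> x * inv\<^bsub>U\<^esub> x = 1"
  using group.r_inv[OF U_group] by simp
lemma l_invU: "x \<in> sr_units \<Longrightarrow> inv\<^bsub>U\<^esub> x * x = 1"
  using group.l_inv[OF U_group] by simp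

lemma N_normal: "N \<lhd> U"
  unfolding group.normal_inv_iff[OF U_group]
proof (intro conjI ballI N_subgroup)
  fix x h assume x: "x \<in> carrier U" and h: "h \<in> N"
  then obtain k where hk: "h = phi (Some k)" by (auto simp: N_def')
  have "x * h * inv\<^bsub>U\<^esub> x = h * x * inv\<^bsub>U\<^esub> x" using central hk by simp
  also have "\<dots> = h" using x r_invU by (simp add: mul_assoc mul_one)
  finally show "x \<otimes>\<^bsub>U\<^esub> h \<otimes>\<^bsub>U\<^esub> inv\<^bsub>U\<^esub> x \<in> N" using h by simp
qed

abbreviation Q where "Q \<equiv> unit_quotient phi"

lemma Q_def': "Q = U Mod N" by (simp add: unit_quotient_def)

lemma Q_group: "group Q"
  unfolding Q_def' by (rule normal.factorgroup_is_group[OF N_normal])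

lemma Q_carrier: "carrier Q = rcosets\<^bsub>U\<^esub> N"
  unfolding Q_def' by (simp add: FactGroup_def)
lemma Q_one: "\<one>\<^bsub>Q\<^esub> = N"
  unfolding Q_def' by (simp add: FactGroup_def)

lemma coset_in_Q: "x \<in> sr_units \<Longrightarrow> N #>\<^bsub>U\<^esub> x \<in> carrier Q"
  unfolding Q_carrier by (rule group.rcosetsI[OF U_group subgroup.subset[OF N_subgroup]]) simp

lemma coset_pow: "x \<in> sr_units \<Longrightarrow> (N #>\<^bsub>U\<^esub> x) [^]\<^bsub>Q\<^esub> (n::nat) = N #>\<^bsub>U\<^esub> (x [^]\<^bsub>U\<^esub> n)"
  using hom_nat_pow[OF normal.r_coset_hom_Mod[OF N_normal], of x n] U_group Q_group
  unfolding Q_def' by simp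

lemma coset_eq_N: "x \<in> sr_units \<Longrightarrow> N #>\<^bsub>U\<^esub> x = N \<Longrightarrow> \<exists>k. x = phi (Some k)"
  using group.rcos_self[OF U_group, of x N] N_subgroup by (auto simp: N_def')

lemma coset_phi: "N #>\<^bsub>U\<^esub> phi (Some k) = N"
  using group.coset_join2[OF U_group, of "phi (Some k)" N] N_subgroup phi_unit
  by (auto simp: N_def')

lemma coset_mul_phi: "x \<in> sr_units \<Longrightarrow> N #>\<^bsub>U\<^esub> (x * phi (Some k)) = N #>\<^bsub>U\<^esub> x"
proof -
  assume x: "x \<in> sr_units"
  have "phi (Some k) \<otimes>\<^bsub>U\<^esub> x \<in> N #>\<^bsub>U\<^esub> x"
    by (rule group.rcosI[OF U_group]) (use x phi_unit in \<open>auto simp: N_def'\<close>)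
  then have "x * phi (Some k) \<in> N #>\<^bsub>U\<^esub> x" using central by simp
  then show ?thesis
    using group.repr_independence[OF U_group, of "x * phi (Some k)" N x] x N_subgroup by simp
qed

lemma pow_in_N:
  assumes fin: "finite (carrier Q)" and u: "u \<in> sr_units"
  shows "\<exists>k. u [^]\<^bsub>U\<^esub> order Q = phi (Some k)"
proof -
  have "(N #>\<^bsub>U\<^esub> u) [^]\<^bsub>Q\<^esub> order Q = \<one>\<^bsub>Q\<^esub>"
    using group.pow_order_eq_1[OF Q_group coset_in_Q[OF u]] .
  then have "N #>\<^bsub>U\<^esub> (u [^]\<^bsub>U\<^esub> order Q) = N" using coset_pow[OF u] Q_one by simp
  then show ?thesis using coset_eq_N powU_closed u by blast
qed

lemma total:
  assumes fin: "finite (carrier Q)" and u: "u \<in> sr_units"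
  shows "le u 1 \<or> le 1 u"
proof -
  have M: "0 < order Q" using fin monoid.order_gt_0_iff_finite[OF group.is_monoid[OF Q_group]] by simp
  obtain k where k: "u [^]\<^bsub>U\<^esub> order Q = phi (Some k)" using pow_in_N[OF fin u] by blast
  show ?thesis
  proof (cases "k \<le> 0")
    case True
    then have "le (u [^]\<^bsub>U\<^esub> order Q) 1" using k le_phi[of k 0] phi0 by simp
    then show ?thesis using lemmaA[OF u M] by simp
  next
    case False
    have "(inv\<^bsub>U\<^esub> u) [^]\<^bsub>U\<^esub> order Q = inv\<^bsub>U\<^esub> (u [^]\<^bsub>U\<^esub> order Q)"
      using group.nat_pow_inv[OF U_group] u by simp
    also have "\<dots> = phi (Some (-k))" using k phi_inv by simp
    finally have "le ((inv\<^bsub>U\<^esub> u) [^]\<^bsub>U\<^esub> order Q) 1" using False le_phi[of "-k" 0] phi0 by simp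
    then have "le (inv\<^bsub>U\<^esub> u) 1" using lemmaA[OF inv_unit[OF u] M] by simp
    then have "le (u * inv\<^bsub>U\<^esub> u) (u * 1)" by (rule le_multl)
    then show ?thesis using r_invU[OF u] mul_one by simp
  qed
qed

lemma comparable:
  assumes fin: "finite (carrier Q)" and x: "x \<in> sr_units" and y: "y \<in> sr_units"
  shows "le x y \<or> le y x"
proof -
  have xy: "x * inv\<^bsub>U\<^esub> y \<in> sr_units" using units_mul inv_unit x y by simp
  have e: "x * inv\<^bsub>U\<^esub> y * y = x" using l_invU[OF y] by (simp add: mul_assoc mul_one)
  from total[OF fin xy] show ?thesis
  proof
    assume "le (x * inv\<^bsub>U\<^esub> y) 1"
    then have "le (x * inv\<^bsub>U\<^esub> y * y) (1 * y)" by (rule le_multr)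
    then show ?thesis using e one_mul by simp
  next
    assume "le 1 (x * inv\<^bsub>U\<^esub> y)"
    then have "le (1 * y) (x * inv\<^bsub>U\<^esub> y * y)" by (rule le_multr)
    then show ?thesis using e one_mul by simp
  qed
qed

lemma pow_mono: "le x y \<Longrightarrow> le (x [^]\<^bsub>U\<^esub> (k::nat)) (y [^]\<^bsub>U\<^esub> k)"
proof (induction k)
  case 0 then show ?case by (simp add: le_refl)
next
  case (Suc k)
  have "le (x [^]\<^bsub>U\<^esub> k * x) (x [^]\<^bsub>U\<^esub> k * y)" using Suc.prems by (rule le_multl)
  moreover have "le (x [^]\<^bsub>U\<^esub> k * y) (y [^]\<^bsub>U\<^esub> k * y)" using Suc by (intro le_multr) simp
  ultimately show ?case unfolding powU_Suc by (rule le_trans)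
qed

lemma roots_le:
  assumes x: "x \<in> sr_units" and y: "y \<in> sr_units" and n: "0 < (n::nat)"
    and eq: "x [^]\<^bsub>U\<^esub> n = y [^]\<^bsub>U\<^esub> n" and le: "le x y"
  shows "x = y"
proof -
  obtain m where m: "n = Suc m" using n gr0_implies_Suc by blast
  have a: "le (x [^]\<^bsub>U\<^esub> m * x) (x [^]\<^bsub>U\<^esub> m * y)" using le by (rule le_multl)
  have "le (x [^]\<^bsub>U\<^esub> m * y) (y [^]\<^bsub>U\<^esub> m * y)" using pow_mono[OF le] by (rule le_multr)
  then have b: "le (x [^]\<^bsub>U\<^esub> m * y) (x [^]\<^bsub>U\<^esub> m * x)" using eq m by (simp add: powU_Suc)
  have "x [^]\<^bsub>U\<^esub> m * x = x [^]\<^bsub>U\<^esub> m * y" using le_antisym[OF a b] .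
  then show ?thesis
    using monoid.Units_l_cancel[OF group.is_monoid[OF U_group], of "x [^]\<^bsub>U\<^esub> m" x y]
      group.Units_eq[OF U_group] powU_closed x y by simp
qed

lemma unique_roots:
  assumes fin: "finite (carrier Q)" and x: "x \<in> sr_units" and y: "y \<in> sr_units" and n: "0 < (n::nat)"
    and eq: "x [^]\<^bsub>U\<^esub> n = y [^]\<^bsub>U\<^esub> n"
  shows "x = y"
  using comparable[OF fin x y] roots_le[OF x y n eq] roots_le[OF y x n eq[symmetric]] by auto

lemma Q_cosetE:
  assumes "g \<in> carrier Q" obtains x where "x \<in> sr_units" "g = N #>\<^bsub>U\<^esub> x"
  using assms unfolding Q_carrier RCOSETS_def by auto

lemma Q_pow_Suc: "g [^]\<^bsub>Q\<^esub> Suc k = g [^]\<^bsub>Q\<^esub> k \<otimes>\<^bsub>Q\<^esub> g"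
  using monoid.nat_pow_Suc[OF group.is_monoid[OF Q_group]] by simp

lemma pow_in_generate: "g [^]\<^bsub>Q\<^esub> (k::nat) \<in> generate Q {g}"
proof (induction k)
  case 0 then show ?case by (simp add: generate.one)
next
  case (Suc k) then show ?case
    unfolding Q_pow_Suc by (rule generate.eng) (simp add: generate.incl)
qed

lemma ord_coprime:
  assumes fin: "finite (carrier Q)" and x: "x \<in> sr_units" and n: "0 < n"
    and ordn: "group.ord Q (N #>\<^bsub>U\<^esub> x) = n"
    and xa: "x [^]\<^bsub>U\<^esub> n = phi (Some a)"
  shows "gcd a (int n) = 1"
proof -
  define d where "d = gcd a (int n)"
  have d0: "d > 0" using n by (simp add: d_def)
  obtain a' where a': "a = d * a'" unfolding d_def by (meson gcd_dvd1 dvdE)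
  obtain n'' where n'': "int n = d * n''" unfolding d_def by (meson gcd_dvd2 dvdE)
  have "0 < d * n''" using n'' n by linarith
  then have n''0: "n'' > 0" using d0 by (simp add: zero_less_mult_iff)
  define dd where "dd = nat d"
  define n' where "n' = nat n''"
  have "int (n' * dd) = n'' * d" using d0 n''0 by (simp add: n'_def dd_def)
  then have "int n = int (n' * dd)" using n'' by (simp add: mult.commute)
  then have nn: "n = n' * dd" by (simp only: of_nat_eq_iff)
  have dd0: "0 < dd" using d0 by (simp add: dd_def)
  have "(x [^]\<^bsub>U\<^esub> n') [^]\<^bsub>U\<^esub> dd = phi (Some a') [^]\<^bsub>U\<^esub> dd"
  proof -
    have "(x [^]\<^bsub>U\<^esub> n') [^]\<^bsub>U\<^esub> dd = x [^]\<^bsub>U\<^esub> n"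
      using monoid.nat_pow_pow[OF group.is_monoid[OF U_group], of x n' dd] x nn by simp
    also have "\<dots> = phi (Some (int dd * a'))" using xa a' d0 by (simp add: dd_def)
    finally show ?thesis by (simp add: phi_pow)
  qed
  then have "x [^]\<^bsub>U\<^esub> n' = phi (Some a')"
    using unique_roots[OF fin powU_closed[OF x] phi_unit dd0] by simp
  then have "(N #>\<^bsub>U\<^esub> x) [^]\<^bsub>Q\<^esub> n' = \<one>\<^bsub>Q\<^esub>"
    using coset_pow[OF x] coset_phi Q_one by simp
  then have "n dvd n'" using group.pow_eq_id[OF Q_group coset_in_Q[OF x]] ordn by simp
  moreover have "0 < n'" using n''0 by (simp add: n'_def)
  ultimately have "n \<le> n'" by (simp add: dvd_imp_le)
  have "dd = 1" by (rule aux_dd[OF \<open>n \<le> n'\<close> nn \<open>0 < n'\<close> dd0])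
  then have d1: "d = 1" unfolding dd_def by (rule aux_d)
  have gd: "gcd a (int n) = d" unfolding d_def ..
  show ?thesis using gd d1 by (rule trans)
qed


lemma coset_pow_one:
  assumes x: "x \<in> sr_units" and n: "0 < n" and ordn: "group.ord Q (N #>\<^bsub>U\<^esub> x) = n"
  shows "\<exists>a. x [^]\<^bsub>U\<^esub> n = phi (Some a)"
proof -
  have "(N #>\<^bsub>U\<^esub> x) [^]\<^bsub>Q\<^esub> n = \<one>\<^bsub>Q\<^esub>"
    using group.pow_ord_eq_1[OF Q_group coset_in_Q[OF x]] ordn by simp
  then have "N #>\<^bsub>U\<^esub> (x [^]\<^bsub>U\<^esub> n) = N" using coset_pow[OF x] Q_one by simp
  then show ?thesis by (rule coset_eq_N[OF powU_closed[OF x]])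
qed

lemma gen_incl:
  assumes fin: "finite (carrier Q)" and g1: "g1 \<in> carrier Q" and g2: "g2 \<in> carrier Q"
    and n: "0 < n"
    and c1: "card (generate Q {g1}) = n" and c2: "card (generate Q {g2}) = n"
  shows "generate Q {g2} \<subseteq> generate Q {g1}"
proof -
  obtain x where x: "x \<in> sr_units" "g1 = N #>\<^bsub>U\<^esub> x" using Q_cosetE[OF g1] by blast
  obtain y where y: "y \<in> sr_units" "g2 = N #>\<^bsub>U\<^esub> y" using Q_cosetE[OF g2] by blast
  have o1: "group.ord Q g1 = n" using group.generate_pow_card[OF Q_group g1] c1 by simp
  have o2: "group.ord Q g2 = n" using group.generate_pow_card[OF Q_group g2] c2 by simp
  obtain a where a: "x [^]\<^bsub>U\<^esub> n = phi (Some a)" using coset_pow_one[OF x(1) n] o1 x(2) by blast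
  obtain b where b: "y [^]\<^bsub>U\<^esub> n = phi (Some b)" using coset_pow_one[OF y(1) n] o2 y(2) by blast
  have g: "gcd a (int n) = 1" using ord_coprime[OF fin x(1) n _ a] o1 x(2) by simp
  obtain u v where uv: "u * a + v * int n = 1" using bezout_int[of a "int n"] g by auto
  define r where "r = nat ((u * b) mod int n)"
  define D where "D = (u * b) div int n"
  have m0: "0 \<le> (u * b) mod int n" using n by simp
  have "int r = (u * b) mod int n" unfolding r_def using m0 by simp
  also have "\<dots> = u * b - int n * D"
    unfolding D_def using minus_mult_div_eq_mod[of "u * b" "int n"] by simp
  finally have rr: "int r = u * b - int n * D" .
  define q where "q = b * v + D * a"
  have bq: "b = int r * a + int n * q"
  proof -
    have "int r * a + int n * q = (u * b - int n * D) * a + int n * (b * v + D * a)"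
      by (simp add: rr q_def)
    also have "\<dots> = b * (u * a + v * int n)" by (simp add: algebra_simps)
    finally show ?thesis using uv by simp
  qed
  define z where "z = x [^]\<^bsub>U\<^esub> r * phi (Some q)"
  have xr: "x [^]\<^bsub>U\<^esub> r \<in> sr_units" using powU_closed x by simp
  have zu: "z \<in> sr_units" unfolding z_def using units_mul xr phi_unit by simp
  have "z [^]\<^bsub>U\<^esub> n = (x [^]\<^bsub>U\<^esub> r) [^]\<^bsub>U\<^esub> n * phi (Some q) [^]\<^bsub>U\<^esub> n"
    using monoid.pow_mult_distrib[OF group.is_monoid[OF U_group], of "x [^]\<^bsub>U\<^esub> r" "phi (Some q)" n]
      xr phi_unit central unfolding z_def by simp
  also have "(x [^]\<^bsub>U\<^esub> r) [^]\<^bsub>U\<^esub> n = (x [^]\<^bsub>U\<^esub> n) [^]\<^bsub>U\<^esub> r"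
    using monoid.nat_pow_pow[OF group.is_monoid[OF U_group]] x by (simp add: mult.commute)
  also have "\<dots> = phi (Some (int r * a))" using a phi_pow by simp
  also have "phi (Some q) [^]\<^bsub>U\<^esub> n = phi (Some (int n * q))" by (rule phi_pow)
  finally have "z [^]\<^bsub>U\<^esub> n = y [^]\<^bsub>U\<^esub> n" using phi_mul bq b by simp
  then have "z = y" using unique_roots[OF fin zu y(1) n] by simp
  then have "g2 = N #>\<^bsub>U\<^esub> z" using y(2) by simp
  also have "\<dots> = N #>\<^bsub>U\<^esub> (x [^]\<^bsub>U\<^esub> r)" unfolding z_def by (rule coset_mul_phi[OF xr])
  also have "\<dots> = g1 [^]\<^bsub>Q\<^esub> r" using coset_pow[OF x(1)] x(2) by simp
  finally have g2in: "g2 \<in> generate Q {g1}" using pow_in_generate by simp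
  have sg: "subgroup (generate Q {g1}) Q"
    by (rule group.generate_is_subgroup[OF Q_group]) (use g1 in simp)
  show ?thesis
    by (rule group.generate_subgroup_incl[OF Q_group _ sg]) (use g2in in blast)
qed

end

theorem mainTheorem16:
  fixes phi :: "zmax \<Rightarrow> 'a::{plus,times,zero,one}"
    and n :: nat
  assumes "is_division_semialgebra_zmax phi"
    and "finite (carrier (unit_quotient phi))"
    and "0 < n"
  shows "\<forall>H1 H2. subgroup H1 (unit_quotient phi) \<and> subgroup H2 (unit_quotient phi)
      \<and> (\<exists>g\<in>carrier (unit_quotient phi). H1 = generate (unit_quotient phi) {g})
      \<and> (\<exists>g\<in>carrier (unit_quotient phi). H2 = generate (unit_quotient phi) {g})
      \<and> card H1 = n \<and> card H2 = n \<longrightarrow> H1 = H2"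
proof (intro allI impI)
  interpret dsa phi by (rule dsa.intro) (rule assms(1))
  fix H1 H2
  assume h: "subgroup H1 (unit_quotient phi) \<and> subgroup H2 (unit_quotient phi)
      \<and> (\<exists>g\<in>carrier (unit_quotient phi). H1 = generate (unit_quotient phi) {g})
      \<and> (\<exists>g\<in>carrier (unit_quotient phi). H2 = generate (unit_quotient phi) {g})
      \<and> card H1 = n \<and> card H2 = n"
  then obtain g1 g2 where g1: "g1 \<in> carrier (unit_quotient phi)" "H1 = generate (unit_quotient phi) {g1}"
    and g2: "g2 \<in> carrier (unit_quotient phi)" "H2 = generate (unit_quotient phi) {g2}"
    by blast
  have "H2 \<subseteq> H1" using gen_incl[OF assms(2) g1(1) g2(1) assms(3)] h g1(2) g2(2) by simp
  moreover have "finite H1"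
    using h assms(2) by (meson subgroup.subset finite_subset)
  ultimately have "H2 = H1" using h card_subset_eq[of H1 H2] by simp
  then show "H1 = H2" by simp
qed

end
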